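(* For every natural number $n \geq 0$, $$G_n = \sum_{1 \leq \ell \leq k \leq n} (-1)^{k-1} (\ell-1)!\,(k-\ell)!\, S(n,k).$$ In particular, $G_n$ is an integer for every $n \in \mathbb{N}$.
   Context: The Genocchi numbers $G_n$ ($n \in \mathbb{N}$) are defined by the exponential generating function $\frac{2x}{e^x+1} = \sum_{n=0}^{\infty} G_n \frac{x^n}{n!}$. The Stirling numbers of the second kind $S(n,k)$ ($0 \le k \le n$) are the integers defined by the polynomial identity $X^n = \sum_{k=0}^{n} S(n,k)\, X(X-1)\cdots(X-k+1)$. (For $n=0$ the sum is empty and the claim reads $G_0 = 0$.) *)

theory Defs
  imports Complex_Main "HOL-Computational_Algebra.Formal_Power_Series" "HOL-Combinatorics.Stirling"
begin

definition genocchi_egf :: "real fps" where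
  "genocchi_egf = (2 * fps_X) / (fps_exp 1 + 1)"

definition Genocchi :: "nat \<Rightarrow> real" where
  "Genocchi n = fact n * fps_nth genocchi_egf n"

end

theory Submission
  imports Defs
begin
unbundle fps_syntax
lemma egf_eq: "genocchi_egf * (fps_exp 1 + 1) = 2 * fps_X"
proof -
  have "(fps_exp (1::real) + 1) $ 0 \<noteq> 0" by simp
  thus ?thesis unfolding genocchi_egf_def
    by (simp add: fps_divide_unit mult.assoc inverse_mult_eq_1)
qed

lemma gen_rec: "(\<Sum>i=0..n. real (n choose i) * Genocchi i) + Genocchi n = (if n = 1 then 2 else 0)"
proof -
  have x: "(2 * fps_X :: real fps) $ n = (if n = 1 then 2 else 0)"
    by (auto simp: fps_mult_nth fps_numeral_nth intro!: sum.neutral)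
  have "(genocchi_egf * (fps_exp 1 + 1)) $ n = (2 * fps_X) $ n" by (simp add: egf_eq)
  note this[unfolded x]
  hence "(\<Sum>i=0..n. genocchi_egf $ i * (1 / fact (n-i) + (if n - i = 0 then 1 else 0))) = (if n = 1 then 2 else 0)"
    by (simp add: fps_mult_nth)
  hence "fact n * (\<Sum>i=0..n. genocchi_egf $ i * (1 / fact (n-i) + (if n - i = 0 then 1 else 0))) = (if n = 1 then 2 else 0)"
    by auto
  moreover have "fact n * (\<Sum>i=0..n. genocchi_egf $ i * (1 / fact (n-i) + (if n - i = 0 then 1 else 0)))
     = (\<Sum>i=0..n. real (n choose i) * Genocchi i) + Genocchi n"
  proof -
    have "fact n * (\<Sum>i=0..n. genocchi_egf $ i * (1 / fact (n-i) + (if n - i = 0 then 1 else 0)))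
      = (\<Sum>i=0..n. fact n * genocchi_egf $ i / fact (n-i)) + (\<Sum>i=0..n. fact n * genocchi_egf $ i * (if n - i = 0 then 1 else 0))"
      by (simp add: sum_distrib_left algebra_simps sum.distrib)
    also have "(\<Sum>i=0..n. fact n * genocchi_egf $ i / fact (n-i)) = (\<Sum>i=0..n. real (n choose i) * Genocchi i)"
    proof (rule sum.cong)
      fix i assume "i \<in> {0..n}"
      hence "real (n choose i) = fact n / (fact i * fact (n-i))" by (simp add: binomial_fact)
      thus "fact n * genocchi_egf $ i / fact (n-i) = real (n choose i) * Genocchi i"
        by (simp add: Genocchi_def field_simps)
    qed simp
    also have "(\<Sum>i=0..n. fact n * genocchi_egf $ i * (if n - i = 0 then 1 else 0)) = Genocchi n"
    proof -
      have "(\<Sum>i=0..n. fact n * genocchi_egf $ i * (if n - i = 0 then 1 else (0::real))) = (\<Sum>i\<in>{n}. fact n * genocchi_egf $ i)"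
        by (rule sum.mono_neutral_cong_right) auto
      thus ?thesis by (simp add: Genocchi_def)
    qed
    finally show ?thesis .
  qed
  ultimately show ?thesis by simp
qed

definition aa :: "nat \<Rightarrow> real" where "aa k = (\<Sum>j<k. fact j * fact (k - 1 - j))"
definition cc :: "nat \<Rightarrow> real" where "cc k = (-1) ^ (k - 1) * aa k"

lemma aux_fact: "real (j + d + 2) * fact j * fact d = fact j * fact (Suc d) + fact (Suc j) * fact d"
  by (simp add: algebra_simps)

lemma lemA: "real (Suc k) * aa k = 2 * aa (Suc k) - 2 * fact k"
proof -
  have "real (Suc k) * aa k = (\<Sum>j<k. fact j * fact (k-j) + fact (Suc j) * fact (k - Suc j))"
    unfolding aa_def sum_distrib_left
  proof (rule sum.cong)
    fix j assume "j \<in> {..<k}"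
    then obtain d where d: "k = j + d + 1" by (metis add.commute add_Suc_right add_0_right lessThan_iff less_imp_Suc_add plus_1_eq_Suc)
    have "k - 1 - j = d" "k - j = Suc d" "k - Suc j = d" using d by auto
    moreover have "real (Suc k) = real (j + d + 2)" using d by simp
    ultimately show "real (Suc k) * (fact j * fact (k - 1 - j)) = fact j * fact (k-j) + fact (Suc j) * fact (k - Suc j)"
      using aux_fact[of j d] by (simp add: algebra_simps)
  qed simp
  also have "\<dots> = (\<Sum>j<k. fact j * fact (k-j)) + (\<Sum>j<k. fact (Suc j) * fact (k - Suc j))"
    by (simp add: sum.distrib)
  also have "(\<Sum>j<k. fact j * fact (k-j)) = aa (Suc k) - fact k"
    by (simp add: aa_def)
  also have "(\<Sum>j<k. fact (Suc j) * fact (k - Suc j)) = aa (Suc k) - fact k"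
    using sum.lessThan_Suc_shift[of "\<lambda>j. fact j * fact (k - j) :: real" k] by (simp add: aa_def)
  finally show ?thesis by simp
qed

lemma lemB: "2 * cc (Suc k) + real (Suc k) * cc k = 2 * (-1) ^ k * fact k"
proof (cases k)
  case 0 then show ?thesis by (simp add: cc_def aa_def)
next
  case (Suc m)
  have "cc k = - ((-1) ^ k * aa k)" using Suc by (simp add: cc_def)
  hence "2 * cc (Suc k) + real (Suc k) * cc k = (-1)^k * (2 * aa (Suc k) - real (Suc k) * aa k)"
    by (simp add: cc_def algebra_simps)
  also have "\<dots> = 2 * (-1) ^ k * fact k" using lemA[of k] by simp
  finally show ?thesis .
qed

lemma lemC: "(\<Sum>m<n. (-1) ^ m * fact m * real (Stirling n (Suc m))) = (if n = 1 then 1 else (0::real))"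
proof (cases n)
  case 0 then show ?thesis by simp
next
  case (Suc p)
  have "(\<Sum>m<Suc p. (-1) ^ m * fact m * real (Stirling (Suc p) (Suc m)))
     = (\<Sum>m<Suc p. (-1) ^ m * fact (Suc m) * real (Stirling p (Suc m)))
       + (\<Sum>m<Suc p. (-1) ^ m * fact m * real (Stirling p m))"
    by (simp add: sum.distrib[symmetric] algebra_simps)
  also have "(\<Sum>m<Suc p. (-1) ^ m * fact (Suc m) * real (Stirling p (Suc m)))
      = (\<Sum>m<p. (-1) ^ m * fact (Suc m) * real (Stirling p (Suc m)))" by simp
  also have "(\<Sum>m<Suc p. (-1) ^ m * fact m * real (Stirling p m))
      = real (Stirling p 0) - (\<Sum>m<p. (-1) ^ m * fact (Suc m) * real (Stirling p (Suc m)))"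
    unfolding sum.lessThan_Suc_shift by (simp add: sum_negf)
  finally show ?thesis using Suc by (cases p) auto
qed

lemma lemL1: "(\<Sum>i\<le>n. (n choose i) * Stirling i k) = Stirling (Suc n) (Suc k)"
proof (induction n arbitrary: k)
  case 0 then show ?case by (cases k) auto
next
  case (Suc n)
  have split: "(\<Sum>i\<le>Suc n. (Suc n choose i) * g i) = (\<Sum>i\<le>n. (n choose i) * g (Suc i)) + (\<Sum>i\<le>n. (n choose i) * g i)" for g :: "nat \<Rightarrow> nat"
  proof -
    have "(\<Sum>i\<le>Suc n. (Suc n choose i) * g i) = g 0 + (\<Sum>i\<le>n. (Suc n choose Suc i) * g (Suc i))"
      unfolding sum.atMost_Suc_shift by simp
    also have "\<dots> = (\<Sum>i\<le>n. (n choose i) * g (Suc i)) + (g 0 + (\<Sum>i\<le>n. (n choose Suc i) * g (Suc i)))"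
      by (simp add: sum.distrib algebra_simps)
    also have "g 0 + (\<Sum>i\<le>n. (n choose Suc i) * g (Suc i)) = (\<Sum>i\<le>Suc n. (n choose i) * g i)"
      unfolding sum.atMost_Suc_shift by simp
    also have "\<dots> = (\<Sum>i\<le>n. (n choose i) * g i)" by simp
    finally show ?thesis .
  qed
  show ?case
  proof (cases k)
    case 0
    have "(\<Sum>i\<le>Suc n. (Suc n choose i) * Stirling i 0) = (\<Sum>i\<in>{0}. (Suc n choose i) * Stirling i 0)"
      by (rule sum.mono_neutral_cong_right) (auto, case_tac i, auto)
    moreover have "Stirling (Suc (Suc n)) (Suc 0) = 1" by (rule Stirling_1)
    ultimately show ?thesis using 0 by (simp del: Stirling.simps)
  next
    case (Suc m)
    have "(\<Sum>i\<le>Suc n. (Suc n choose i) * Stirling i k)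
       = (\<Sum>i\<le>n. (n choose i) * Stirling (Suc i) (Suc m)) + Stirling (Suc n) (Suc k)"
      using split[of "\<lambda>i. Stirling i k"] Suc.IH[of k] Suc by simp
    also have "(\<Sum>i\<le>n. (n choose i) * Stirling (Suc i) (Suc m))
       = Suc m * (\<Sum>i\<le>n. (n choose i) * Stirling i (Suc m)) + (\<Sum>i\<le>n. (n choose i) * Stirling i m)"
      by (simp add: sum_distrib_left sum.distrib[symmetric] algebra_simps)
    also have "\<dots> = Suc m * Stirling (Suc n) (Suc k) + Stirling (Suc n) k"
      using Suc.IH[of k] Suc.IH[of m] \<open>k = Suc m\<close> by simp
    finally show ?thesis using \<open>k = Suc m\<close> by simp
  qed
qed
definition HH :: "nat \<Rightarrow> real" where "HH n = (\<Sum>k\<le>n. cc k * real (Stirling n k))"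

lemma HH_ext: "i \<le> n \<Longrightarrow> HH i = (\<Sum>k\<le>n. cc k * real (Stirling i k))"
  unfolding HH_def by (rule sum.mono_neutral_left) auto

lemma H_rec: "(\<Sum>i=0..n. real (n choose i) * HH i) + HH n = (if n = 1 then 2 else 0)"
proof -
  have "(\<Sum>i=0..n. real (n choose i) * HH i) = (\<Sum>i\<le>n. \<Sum>k\<le>n. real (n choose i) * (cc k * real (Stirling i k)))"
    by (simp add: atLeast0AtMost HH_ext sum_distrib_left)
  also have "\<dots> = (\<Sum>k\<le>n. cc k * (\<Sum>i\<le>n. real ((n choose i) * Stirling i k)))"
    by (subst sum.swap) (simp add: sum_distrib_left algebra_simps)
  also have "\<dots> = (\<Sum>k\<le>n. cc k * real (Stirling (Suc n) (Suc k)))"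
    by (simp only: of_nat_sum[symmetric] lemL1)
  finally have "(\<Sum>i=0..n. real (n choose i) * HH i) + HH n
     = (\<Sum>k\<le>n. cc k * real (Suc k) * real (Stirling n (Suc k))) + (\<Sum>k\<le>n. 2 * cc k * real (Stirling n k))"
    by (simp add: HH_def sum.distrib[symmetric] algebra_simps)
  also have "(\<Sum>k\<le>n. cc k * real (Suc k) * real (Stirling n (Suc k)))
      = (\<Sum>k<n. cc k * real (Suc k) * real (Stirling n (Suc k)))"
    by (simp add: lessThan_Suc_atMost[symmetric])
  also have "(\<Sum>k\<le>n. 2 * cc k * real (Stirling n k)) = (\<Sum>k<n. 2 * cc (Suc k) * real (Stirling n (Suc k)))"
    unfolding lessThan_Suc_atMost[symmetric] sum.lessThan_Suc_shift by (simp add: cc_def aa_def)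
  also have "(\<Sum>k<n. cc k * real (Suc k) * real (Stirling n (Suc k))) + (\<Sum>k<n. 2 * cc (Suc k) * real (Stirling n (Suc k)))
     = (\<Sum>k<n. (2 * cc (Suc k) + real (Suc k) * cc k) * real (Stirling n (Suc k)))"
    by (simp add: sum.distrib[symmetric] algebra_simps)
  also have "\<dots> = 2 * (\<Sum>k<n. (-1) ^ k * fact k * real (Stirling n (Suc k)))"
  proof -
    have "(\<Sum>k<n. (2 * cc (Suc k) + real (Suc k) * cc k) * real (Stirling n (Suc k)))
       = (\<Sum>k<n. 2 * ((-1) ^ k * fact k * real (Stirling n (Suc k))))"
      by (intro sum.cong refl) (subst lemB, simp)
    thus ?thesis by (simp add: sum_distrib_left)
  qed
  also have "\<dots> = (if n = 1 then 2 else 0)" by (simp add: lemC)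
  finally show ?thesis .
qed

lemma G_eq_H: "Genocchi n = HH n"
proof (induction n rule: less_induct)
  case (less n)
  have s: "(\<Sum>i=0..n. real (n choose i) * X i) = (\<Sum>i<n. real (n choose i) * X i) + X n" for X
    by (simp add: atLeast0AtMost lessThan_Suc_atMost[symmetric])
  have "(\<Sum>i<n. real (n choose i) * Genocchi i) = (\<Sum>i<n. real (n choose i) * HH i)"
    using less by simp
  with gen_rec[of n] H_rec[of n] s[of Genocchi] s[of HH] show ?case by linarith
qed

lemma aa_alt: "(\<Sum>l\<in>{1..k}. fact (l - 1) * fact (k - l)) = (aa k :: real)"
  unfolding aa_def image_Suc_lessThan[symmetric] by (simp add: sum.reindex)

theorem theorem1:
  fixes n :: nat
  shows "Genocchi n =
           (\<Sum>k\<in>{1..n}. \<Sum>l\<in>{1..k}.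
              (-1) ^ (k - 1) * fact (l - 1) * fact (k - l) * real (Stirling n k))
         \<and> Genocchi n \<in> \<int>"
proof -
  have r: "(\<Sum>k\<in>{1..n}. \<Sum>l\<in>{1..k}.
              (-1) ^ (k - 1) * fact (l - 1) * fact (k - l) * real (Stirling n k))
        = (\<Sum>k\<in>{1..n}. cc k * real (Stirling n k))"
  proof (rule sum.cong)
    fix k assume "k \<in> {1..n}"
    have "(\<Sum>l\<in>{1..k}. (-1) ^ (k - 1) * fact (l - 1) * fact (k - l) * real (Stirling n k))
       = (-1) ^ (k - 1) * real (Stirling n k) * (\<Sum>l\<in>{1..k}. fact (l - 1) * fact (k - l))"
      by (simp add: sum_distrib_left algebra_simps)
    thus "(\<Sum>l\<in>{1..k}. (-1) ^ (k - 1) * fact (l - 1) * fact (k - l) * real (Stirling n k))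
       = cc k * real (Stirling n k)" unfolding cc_def aa_alt[symmetric] by simp
  qed simp
  have h: "HH n = (\<Sum>k\<in>{1..n}. cc k * real (Stirling n k))"
  proof -
    have "{..n} = insert 0 {1..n}" by auto
    thus ?thesis unfolding HH_def by (simp add: cc_def aa_def)
  qed
  have eq: "Genocchi n = (\<Sum>k\<in>{1..n}. \<Sum>l\<in>{1..k}.
              (-1) ^ (k - 1) * fact (l - 1) * fact (k - l) * real (Stirling n k))"
    using G_eq_H[of n] r h by simp
  have "(\<Sum>k\<in>{1..n}. \<Sum>l\<in>{1..k}.
              (-1) ^ (k - 1) * fact (l - 1) * fact (k - l) * real (Stirling n k)) \<in> \<int>"
    by (intro Ints_sum Ints_mult Ints_power) (auto simp: fact_in_Ints)
  with eq show ?thesis by simp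
qed
end
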